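(* Let $1\le q<p<\infty$ and $z>m_{p,q}$ with $z^*=(z^q,1)\in\mathcal J_p$. Then $$\inf\{\Lambda_p^*(t_1,t_2):\ t_1,t_2>0,\ t_1^{1/q}t_2^{-1/p}=z\}=\Lambda_p^*(z^* ),$$ and $z^*$ is the unique point of the set $\{(t_1,t_2):t_1,t_2>0,\ t_1^{1/q}t_2^{-1/p}=z\}$ at which this infimum is attained.
   Context: Let $f_p(x)=\frac{1}{2p^{1/p}\Gamma(1+1/p)}e^{-|x|^p/p}$, $m_{p,q}=(\int_{\mathbb R}|x|^qf_p(x)dx)^{1/q}$. For $\tau\in\mathbb R^2$, $\Lambda_p(\tau)=\log\int_{\mathbb R}e^{\tau_1|y|^q+\tau_2|y|^p}f_p(y)\,dy$, finite exactly on $\mathcal D_p=\mathbb R\times(-\infty,1/p)$; $\Lambda_p^*(x)=\sup_{\tau\in\mathbb R^2}(\langle x,\tau\rangle-\Lambda_p(\tau))$. $\mathcal J_p$ is the set of $x\in\mathbb R^2$ for which there exists (a unique) $\tau(x)\in\mathcal D_p$ with $\nabla_\tau\Lambda_p(\tau(x))=x$. *)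

theory Defs
  imports "HOL-Analysis.Analysis" "HOL-Library.Extended_Real"
begin

definition fp :: "real \<Rightarrow> real \<Rightarrow> real" where
  "fp p x = exp (- (\<bar>x\<bar> powr p) / p) / (2 * p powr (1/p) * Gamma (1 + 1/p))"

definition mpq :: "real \<Rightarrow> real \<Rightarrow> real" where
  "mpq p q = (\<integral>x. \<bar>x\<bar> powr q * fp p x \<partial>lborel) powr (1/q)"

definition Lam :: "real \<Rightarrow> real \<Rightarrow> real \<times> real \<Rightarrow> real" where
  "Lam p q tau = ln (\<integral>y. exp (fst tau * \<bar>y\<bar> powr q + snd tau * \<bar>y\<bar> powr p) * fp p y \<partial>lborel)"

text \<open>D_p = R x (-infinity, 1/p), the set where Lambda_p is finite.\<close>
definition Dp :: "real \<Rightarrow> (real \<times> real) set" where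
  "Dp p = UNIV \<times> {..<1/p}"

text \<open>Legendre transform. Outside D_p, Lambda_p = +infinity, so those tau contribute -infinity
  to the supremum; hence the supremum can be taken over D_p. The value may be +infinity.\<close>
definition LamStar :: "real \<Rightarrow> real \<Rightarrow> real \<times> real \<Rightarrow> ereal" where
  "LamStar p q x = (SUP tau \<in> Dp p. ereal (inner x tau - Lam p q tau))"

definition Jp :: "real \<Rightarrow> real \<Rightarrow> (real \<times> real) set" where
  "Jp p q = {x. \<exists>tau \<in> Dp p. (Lam p q has_derivative (\<lambda>h. inner x h)) (at tau)}"

end

theory Submission
  imports Defs "HOL-Probability.Probability"
begin


lemma integrable_exp_neg_abs: "integrable lborel (\<lambda>y::real. exp (- \<bar>y\<bar>))"
proof -
  let ?e = "exponential_density (1::real)"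
  have ps: "prob_space (density lborel ?e)" by (rule prob_space_exponential_density) simp
  have nn: "(\<integral>\<^sup>+x. ennreal (?e x) \<partial>lborel) = 1"
    using prob_space.emeasure_space_1[OF ps] by (simp add: emeasure_density)
  have ie: "integrable lborel ?e"
  proof (rule integrableI_nonneg)
    show "?e \<in> borel_measurable lborel" by (simp add: exponential_density_def)
    show "AE x in lborel. 0 \<le> ?e x" by (simp add: exponential_density_def)
    show "(\<integral>\<^sup>+x. ennreal (?e x) \<partial>lborel) < \<infinity>" by (simp add: nn)
  qed
  have ie2: "integrable lborel (\<lambda>x. ?e (0 + (-1) * x))"
    using lborel_integrable_real_affine_iff[of "-1" ?e 0] ie by simp
  have "integrable lborel (\<lambda>x. ?e x + ?e (0 + (-1) * x))"
    using ie ie2 by simp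
  then show ?thesis
  proof (rule Bochner_Integration.integrable_bound)
    show "(\<lambda>y::real. exp (- \<bar>y\<bar>)) \<in> borel_measurable lborel" by measurable
    show "AE x in lborel. norm (exp (- \<bar>x\<bar>)) \<le> norm (?e x + ?e (0 + (-1) * x))"
      by (auto simp: exponential_density_def)
  qed
qed

lemma exponent_bound:
  fixes a b p q :: real
  assumes "1 < p" "q < p" "0 \<le> q" "b > 0"
  shows "\<exists>K. \<forall>r\<ge>0. a * r powr q - b * r powr p \<le> K - r"
proof -
  have "((\<lambda>r. \<bar>a\<bar> * r powr (q - p) + r powr (1 - p)) \<longlongrightarrow> \<bar>a\<bar> * 0 + 0) at_top"
    using assms by (intro tendsto_intros tendsto_neg_powr filterlim_ident) auto
  then have "eventually (\<lambda>r. \<bar>a\<bar> * r powr (q - p) + r powr (1 - p) < b) at_top"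
    using assms(4) by (intro order_tendstoD) auto
  then obtain R0 where R0: "\<And>r. r \<ge> R0 \<Longrightarrow> \<bar>a\<bar> * r powr (q - p) + r powr (1 - p) < b"
    by (auto simp: eventually_at_top_linorder)
  define R where "R = max R0 1"
  have R: "R \<ge> 1" "R \<ge> R0" by (auto simp: R_def)
  show ?thesis
  proof (intro exI allI impI)
    fix r :: real assume r: "r \<ge> 0"
    show "a * r powr q - b * r powr p \<le> (\<bar>a\<bar> * R powr q + R) - r"
    proof (cases "r \<ge> R")
      case True
      then have rp: "r > 0" using R by auto
      have "\<bar>a\<bar> * r powr (q - p) + r powr (1 - p) < b" using R0 True R by auto
      then have "r powr p * (\<bar>a\<bar> * r powr (q - p) + r powr (1 - p)) \<le> r powr p * b"
        using rp by (intro mult_left_mono) auto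
      moreover have "r powr p * (\<bar>a\<bar> * r powr (q - p) + r powr (1 - p)) = \<bar>a\<bar> * r powr q + r"
        using rp by (simp add: algebra_simps flip: powr_add)
      moreover have "a * r powr q \<le> \<bar>a\<bar> * r powr q" by (intro mult_right_mono) auto
      moreover have "0 \<le> \<bar>a\<bar> * R powr q + R" using R by auto
      ultimately show ?thesis by (simp add: algebra_simps)
    next
      case False
      have "r powr q \<le> R powr q" using False r assms by (intro powr_mono2) auto
      then have "a * r powr q \<le> \<bar>a\<bar> * R powr q"
        by (meson abs_ge_self abs_ge_zero dual_order.trans mult_left_mono mult_right_mono powr_ge_zero)
      moreover have "0 \<le> b * r powr p" using assms by auto
      ultimately show ?thesis using False r by linarith
    qed
  qed
qed

lemma integrable_core:
  fixes a b p q :: real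
  assumes "1 < p" "q < p" "0 \<le> q" "b > 0"
  shows "integrable lborel (\<lambda>y::real. exp (a * \<bar>y\<bar> powr q - b * \<bar>y\<bar> powr p))"
proof -
  obtain K where K: "\<And>r. r \<ge> 0 \<Longrightarrow> a * r powr q - b * r powr p \<le> K - r"
    using exponent_bound[OF assms, of a] by auto
  have "integrable lborel (\<lambda>y::real. exp K * exp (- \<bar>y\<bar>))"
    using integrable_exp_neg_abs by simp
  then show ?thesis
  proof (rule Bochner_Integration.integrable_bound)
    show "(\<lambda>y::real. exp (a * \<bar>y\<bar> powr q - b * \<bar>y\<bar> powr p)) \<in> borel_measurable lborel"
      by measurable
    show "AE y in lborel. norm (exp (a * \<bar>y\<bar> powr q - b * \<bar>y\<bar> powr p)) \<le> norm (exp K * exp (- \<bar>y\<bar>))"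
    proof (rule AE_I2)
      fix y :: real
      have "exp (a * \<bar>y\<bar> powr q - b * \<bar>y\<bar> powr p) \<le> exp (K - \<bar>y\<bar>)"
        using K[of "\<bar>y\<bar>"] by simp
      then show "norm (exp (a * \<bar>y\<bar> powr q - b * \<bar>y\<bar> powr p)) \<le> norm (exp K * exp (- \<bar>y\<bar>))"
        by (simp add: exp_diff exp_minus field_simps)
    qed
  qed
qed

definition Cn :: "real \<Rightarrow> real" where "Cn p = 2 * p powr (1/p) * Gamma (1 + 1/p)"

lemma Cn_pos: "p > 0 \<Longrightarrow> Cn p > 0"
proof -
  assume p: "p > 0"
  then have "0 < 1 + 1/p" by (simp add: add_pos_pos)
  then show ?thesis unfolding Cn_def using p by (intro mult_pos_pos Gamma_real_pos) auto
qed

lemma fp_Cn: "fp p y = exp (- (\<bar>y\<bar> powr p) / p) / Cn p"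
  by (simp add: fp_def Cn_def)

lemma integrand_eq:
  "exp (t1 * \<bar>y\<bar> powr q + t2 * \<bar>y\<bar> powr p) * fp p y
     = exp (t1 * \<bar>y\<bar> powr q - (1/p - t2) * \<bar>y\<bar> powr p) / Cn p"
  unfolding fp_Cn by (simp add: field_simps flip: exp_add)

lemma integrable_E:
  fixes p q t1 t2 :: real
  assumes "1 \<le> q" "q < p" "t2 < 1/p"
  shows "integrable lborel (\<lambda>y. exp (t1 * \<bar>y\<bar> powr q + t2 * \<bar>y\<bar> powr p) * fp p y)"
  unfolding integrand_eq
  by (intro integrable_divide integrable_core) (use assms in auto)

lemma fp_pos: "p > 0 \<Longrightarrow> fp p y > 0"
  unfolding fp_Cn using Cn_pos by auto

lemma AE_lborel_False: "\<not> (AE x in (lborel::real measure). False)"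
  by (simp add: eventually_False ae_filter_eq_bot_iff)

lemma E_pos:
  fixes p q t1 t2 :: real
  assumes "1 \<le> q" "q < p" "t2 < 1/p"
  shows "0 < (\<integral>y. exp (t1 * \<bar>y\<bar> powr q + t2 * \<bar>y\<bar> powr p) * fp p y \<partial>lborel)"
proof -
  have p: "p > 0" using assms by auto
  let ?f = "\<lambda>y. exp (t1 * \<bar>y\<bar> powr q + t2 * \<bar>y\<bar> powr p) * fp p y"
  have pos: "\<And>y. ?f y > 0" using fp_pos[OF p] by auto
  have ge: "0 \<le> integral\<^sup>L lborel ?f"
    using pos by (intro integral_nonneg_AE) (auto intro: less_imp_le)
  have "integral\<^sup>L lborel ?f \<noteq> 0"
  proof
    assume "integral\<^sup>L lborel ?f = 0"
    then have "AE x in lborel. ?f x = 0"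
      using integral_nonneg_eq_0_iff_AE[OF integrable_E[OF assms]] pos
      by (simp add: less_imp_le)
    moreover have "\<And>y. ?f y \<noteq> 0" using pos by (metis less_irrefl)
    ultimately have "AE x in (lborel::real measure). False" by simp
    then show False using AE_lborel_False by simp
  qed
  with ge show ?thesis by auto
qed



lemma Lam_scaling:
  fixes p q t1 t2 :: real
  assumes "1 \<le> q" "q < p" "t2 < 1/p"
  shows "Lam p q (t1, t2) = - (1/p) * ln (1 - p * t2) + Lam p q (t1 * (1 - p * t2) powr (- q / p), 0)"
proof -
  have p: "p > 0" using assms by auto
  define r where "r = 1 - p * t2"
  have r: "r > 0" using assms p by (simp add: r_def field_simps)
  define c where "c = r powr (-1/p)"
  have c: "c > 0" using r by (simp add: c_def)
  have "c powr p = r powr ((-1/p) * p)" unfolding c_def by (rule powr_powr)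
  also have "\<dots> = r powr (-1)" using p by simp
  finally have cp: "c powr p = 1 / r" using r by (simp add: powr_minus_divide)
  have cq: "c powr q = r powr (- q / p)" using r p by (simp add: c_def powr_powr)
  let ?f = "\<lambda>y. exp (t1 * \<bar>y\<bar> powr q + t2 * \<bar>y\<bar> powr p) * fp p y"
  let ?g = "\<lambda>y. exp (t1 * r powr (- q / p) * \<bar>y\<bar> powr q + 0 * \<bar>y\<bar> powr p) * fp p y"
  have pw: "\<And>y. ?f (0 + c * y) = ?g y"
  proof -
    fix y
    have "\<bar>c * y\<bar> powr q = c powr q * \<bar>y\<bar> powr q" "\<bar>c * y\<bar> powr p = c powr p * \<bar>y\<bar> powr p"
      using c by (auto simp: abs_mult powr_mult)
    moreover have "t2 * (1/r * \<bar>y\<bar> powr p) - (1/r * \<bar>y\<bar> powr p) / p = - (\<bar>y\<bar> powr p) / p"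
    proof -
      have "t2 * (1/r * \<bar>y\<bar> powr p) - (1/r * \<bar>y\<bar> powr p) / p
          = \<bar>y\<bar> powr p * (p * t2 - 1) / (r * p)" using r p by (simp add: field_simps)
      also have "p * t2 - 1 = - r" by (simp add: r_def)
      finally show ?thesis using r p by simp
    qed
    ultimately show "?f (0 + c * y) = ?g y"
      unfolding fp_Cn cq cp
      by (simp add: field_simps flip: exp_add)
  qed
  have "integral\<^sup>L lborel ?f = \<bar>c\<bar> *\<^sub>R integral\<^sup>L lborel (\<lambda>y. ?f (0 + c * y))"
    using c by (intro lborel_integral_real_affine) auto
  also have "\<dots> = c * integral\<^sup>L lborel ?g" using c pw by simp
  finally have eq: "integral\<^sup>L lborel ?f = c * integral\<^sup>L lborel ?g" .
  have gpos: "integral\<^sup>L lborel ?g > 0"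
    using E_pos[of q p 0 "t1 * r powr (- q / p)"] assms p by simp
  have "Lam p q (t1, t2) = ln (c * integral\<^sup>L lborel ?g)" unfolding Lam_def using eq by simp
  also have "\<dots> = ln c + ln (integral\<^sup>L lborel ?g)" using c gpos by (simp add: ln_mult)
  also have "ln c = - (1/p) * ln r" using r by (simp add: c_def ln_powr)
  finally show ?thesis unfolding Lam_def r_def by simp
qed

lemma Lam_convex:
  fixes p q a1 a2 b1 b2 th :: real
  assumes "1 \<le> q" "q < p" "a2 < 1/p" "b2 < 1/p" "0 \<le> th" "th \<le> 1"
  shows "Lam p q (th * a1 + (1 - th) * b1, th * a2 + (1 - th) * b2)
           \<le> th * Lam p q (a1, a2) + (1 - th) * Lam p q (b1, b2)"
proof -
  have p: "p > 0" using assms by auto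
  define Fa where "Fa = (\<lambda>y. exp (a1 * \<bar>y\<bar> powr q + a2 * \<bar>y\<bar> powr p) * fp p y)"
  define Fb where "Fb = (\<lambda>y. exp (b1 * \<bar>y\<bar> powr q + b2 * \<bar>y\<bar> powr p) * fp p y)"
  define Ft where "Ft = (\<lambda>y. exp ((th * a1 + (1 - th) * b1) * \<bar>y\<bar> powr q
                      + (th * a2 + (1 - th) * b2) * \<bar>y\<bar> powr p) * fp p y)"
  define A where "A = integral\<^sup>L lborel Fa"
  define B where "B = integral\<^sup>L lborel Fb"
  have c2: "th * a2 + (1 - th) * b2 < 1/p"
  proof -
    have "th * a2 \<le> th * (1/p)" using mult_left_mono[of a2 "1/p" th] assms by simp
    moreover have "(1 - th) * b2 \<le> (1 - th) * (1/p)"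
      using mult_left_mono[of b2 "1/p" "1-th"] assms by simp
    moreover have "th * a2 < th * (1/p) \<or> (1 - th) * b2 < (1 - th) * (1/p)"
    proof (cases "th = 0")
      case False
      then have "th * a2 < th * (1/p)" using assms by (intro mult_strict_left_mono) auto
      then show ?thesis by auto
    qed (use assms in auto)
    moreover have "th * (1/p) + (1 - th) * (1/p) = (th + (1 - th)) * (1/p)"
      by (rule distrib_right[symmetric])
    then have "th * (1/p) + (1 - th) * (1/p) = 1/p" by simp
    ultimately show ?thesis by linarith
  qed
  have iA: "integrable lborel Fa" unfolding Fa_def using assms by (intro integrable_E) auto
  have iB: "integrable lborel Fb" unfolding Fb_def using assms by (intro integrable_E) auto
  have iT: "integrable lborel Ft" unfolding Ft_def using assms c2 by (intro integrable_E) auto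
  have A: "A > 0" unfolding A_def Fa_def using assms by (intro E_pos) auto
  have B: "B > 0" unfolding B_def Fb_def using assms by (intro E_pos) auto
  have T: "integral\<^sup>L lborel Ft > 0" unfolding Ft_def using assms c2 by (intro E_pos) auto
  define K where "K = exp (th * ln A + (1 - th) * ln B)"
  have pw: "Ft y \<le> K * (th / A * Fa y + (1 - th) / B * Fb y)" for y
  proof -
    define u where "u = a1 * \<bar>y\<bar> powr q + a2 * \<bar>y\<bar> powr p - ln A"
    define v where "v = b1 * \<bar>y\<bar> powr q + b2 * \<bar>y\<bar> powr p - ln B"
    have "Ft y = exp (th * u + (1 - th) * v) * K * fp p y"
      unfolding Ft_def K_def u_def v_def
      by (simp flip: exp_add) (simp add: algebra_simps)
    also have "\<dots> \<le> ((1 - th) * exp v + th * exp u) * K * fp p y"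
    proof -
      have "exp ((1 - th) *\<^sub>R v + th *\<^sub>R u) \<le> (1 - th) * exp v + th * exp u"
        using convex_onD[OF exp_convex, of th v u] assms by simp
      then show ?thesis using fp_pos[OF p] by (intro mult_right_mono) (auto simp: K_def algebra_simps less_imp_le)
    qed
    also have "\<dots> = K * (th / A * Fa y + (1 - th) / B * Fb y)"
      using A B unfolding u_def v_def Fa_def Fb_def
      by (simp add: exp_diff field_simps)
    finally show ?thesis .
  qed
  have "integral\<^sup>L lborel Ft \<le> integral\<^sup>L lborel (\<lambda>y. K * (th / A * Fa y + (1 - th) / B * Fb y))"
    using iA iB iT pw by (intro integral_mono) auto
  also have "\<dots> = K * (th / A * A + (1 - th) / B * B)"
    using iA iB by (simp add: A_def B_def)
  also have "\<dots> = K" using A B by simp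
  finally have "ln (integral\<^sup>L lborel Ft) \<le> ln K" using T by simp
  also have "ln K = th * ln A + (1 - th) * ln B" by (simp add: K_def)
  finally show ?thesis unfolding Lam_def A_def B_def Fa_def Fb_def Ft_def by simp
qed



lemma Dp_iff: "t \<in> Dp p \<longleftrightarrow> snd t < 1/p"
  by (cases t) (auto simp: Dp_def)

lemma Lam_tangent:
  fixes p q :: real and x tau0 tau :: "real \<times> real"
  assumes "1 \<le> q" "q < p" "tau0 \<in> Dp p" "tau \<in> Dp p"
    and der: "(Lam p q has_derivative (\<lambda>h. inner x h)) (at tau0)"
  shows "inner x tau - Lam p q tau \<le> inner x tau0 - Lam p q tau0"
proof -
  define d where "d = tau - tau0"
  define g where "g = (\<lambda>t::real. Lam p q (tau0 + t *\<^sub>R d))"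
  define A where "A = {t::real. inner (snd d) t < 1/p - snd tau0}"
  have memA: "t \<in> A \<longleftrightarrow> tau0 + t *\<^sub>R d \<in> Dp p" for t
    by (simp add: A_def Dp_iff inner_real_def algebra_simps)
  have cA: "convex A" unfolding A_def by (rule convex_halfspace_lt)
  have oA: "open A" unfolding A_def by (rule open_halfspace_lt)
  have A0: "0 \<in> A" using memA[of 0] assms by simp
  have A1: "1 \<in> A" using memA[of 1] assms by (simp add: d_def)
  have conv: "convex_on A g"
  proof (rule convex_onI[OF _ cA])
    fix t a b :: real assume t: "0 < t" "t < 1" and ab: "a \<in> A" "b \<in> A"
    define al where "al = tau0 + a *\<^sub>R d"
    define be where "be = tau0 + b *\<^sub>R d"
    have al: "snd al < 1/p" using ab memA by (simp add: al_def Dp_iff)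
    have be: "snd be < 1/p" using ab memA by (simp add: be_def Dp_iff)
    have eq: "tau0 + ((1 - t) * a + t * b) *\<^sub>R d
        = ((1 - t) * fst al + t * fst be, (1 - t) * snd al + t * snd be)"
      by (simp add: al_def be_def prod_eq_iff algebra_simps)
    have "Lam p q ((1 - t) * fst al + t * fst be, (1 - t) * snd al + t * snd be)
        \<le> (1 - t) * Lam p q (fst al, snd al) + t * Lam p q (fst be, snd be)"
      using Lam_convex[of q p "snd al" "snd be" "1-t" "fst al" "fst be"] assms al be t by simp
    then have "Lam p q (tau0 + ((1 - t) * a + t * b) *\<^sub>R d) \<le> (1 - t) * Lam p q al + t * Lam p q be"
      unfolding eq by simp
    moreover have "g a = Lam p q al" "g b = Lam p q be" by (simp_all add: g_def al_def be_def)
    ultimately show "g ((1 - t) *\<^sub>R a + t *\<^sub>R b) \<le> (1 - t) * g a + t * g b"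
      by (simp add: g_def)
  qed
  have gc: "g = Lam p q \<circ> (\<lambda>t::real. tau0 + t *\<^sub>R d)" by (simp add: g_def fun_eq_iff)
  have "((\<lambda>t::real. tau0 + t *\<^sub>R d) has_derivative (\<lambda>h. h *\<^sub>R d)) (at 0)"
    by (auto intro!: derivative_eq_intros)
  moreover have "(Lam p q has_derivative (\<lambda>h. inner x h)) (at ((\<lambda>t::real. tau0 + t *\<^sub>R d) 0))"
    using der by simp
  ultimately have "((Lam p q \<circ> (\<lambda>t::real. tau0 + t *\<^sub>R d)) has_derivative ((\<lambda>h. inner x h) \<circ> (\<lambda>h. h *\<^sub>R d))) (at 0)"
    by (rule diff_chain_at)
  then have "(g has_field_derivative inner x d) (at 0)"
    unfolding gc by (rule has_derivative_imp_has_field_derivative) (simp add: o_def)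
  then have "(g has_field_derivative inner x d) (at 0 within A)"
    by (rule has_field_derivative_at_within)
  from convex_on_imp_above_tangent[OF conv convex_connected[OF cA] _ A1 this]
  have "g 1 - g 0 \<ge> inner x d * (1 - 0)" using A0 oA by (simp add: interior_open)
  then show ?thesis by (simp add: g_def d_def inner_diff_right)
qed

lemma Lam_Phi:
  fixes p q w s :: real and tau :: "real \<times> real"
  assumes "1 \<le> q" "q < p" "tau \<in> Dp p" "s > 0"
  defines "Phi \<equiv> (fst tau * s powr (q/p), (1 - (1 - p * snd tau) * s) / p)"
  shows "Phi \<in> Dp p"
    and "inner (w * s powr (q/p), s) tau - Lam p q tau
           = inner (w, 1) Phi - Lam p q Phi + (s - 1 - ln s) / p"
proof -
  obtain t1 t2 where tau: "tau = (t1, t2)" by (cases tau)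
  have p: "p > 0" using assms by auto
  define r where "r = 1 - p * t2"
  have r: "r > 0" using assms p by (simp add: tau Dp_iff r_def field_simps)
  have rs: "r * s > 0" using r assms by simp
  have sndPhi: "snd Phi = (1 - r * s) / p" by (simp add: Phi_def tau r_def)
  have oneminus: "1 - p * snd Phi = r * s" using p by (simp add: sndPhi)
  show PhiD: "Phi \<in> Dp p" unfolding Dp_iff sndPhi using rs p by (simp add: field_simps)
  have L1: "Lam p q tau = - (1/p) * ln r + Lam p q (t1 * r powr (- q / p), 0)"
    using Lam_scaling[of q p t2 t1] assms by (simp add: tau r_def Dp_iff)
  have L2: "Lam p q Phi = - (1/p) * ln (r * s) + Lam p q (fst Phi * (r * s) powr (- q / p), 0)"
    using Lam_scaling[of q p "snd Phi" "fst Phi"] assms PhiD oneminus by (simp add: Dp_iff)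
  have "fst Phi * (r * s) powr (- q / p) = t1 * r powr (- q / p) * (s powr (q/p) * s powr (- q/p))"
    using r assms by (simp add: Phi_def tau powr_mult)
  also have "s powr (q/p) * s powr (- q/p) = 1" using assms by (simp flip: powr_add)
  finally have arg: "fst Phi * (r * s) powr (- q / p) = t1 * r powr (- q / p)" by simp
  have lnrs: "ln (r * s) = ln r + ln s" using r assms by (simp add: ln_mult)
  show "inner (w * s powr (q/p), s) tau - Lam p q tau
           = inner (w, 1) Phi - Lam p q Phi + (s - 1 - ln s) / p"
    unfolding L1 L2 arg lnrs using p
    by (simp add: tau Phi_def r_def field_simps)
qed

lemma LamStar_value:
  fixes p q w s :: real and tau0 :: "real \<times> real"
  assumes "1 \<le> q" "q < p" "tau0 \<in> Dp p" "s > 0"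
    and der: "(Lam p q has_derivative (\<lambda>h. inner (w, 1) h)) (at tau0)"
  shows "LamStar p q (w * s powr (q/p), s)
           = ereal (inner (w, 1) tau0 - Lam p q tau0 + (s - 1 - ln s) / p)"
proof -
  have p: "p > 0" using assms by auto
  define M where "M = inner (w, 1) tau0 - Lam p q tau0"
  define c where "c = (s - 1 - ln s) / p"
  have le: "ereal (inner (w * s powr (q/p), s) tau - Lam p q tau) \<le> ereal (M + c)"
    if tau: "tau \<in> Dp p" for tau
  proof -
    define Phi where "Phi = (fst tau * s powr (q/p), (1 - (1 - p * snd tau) * s) / p)"
    have PD: "Phi \<in> Dp p"
      using Lam_Phi(1)[OF assms(1,2) tau assms(4)] by (simp add: Phi_def)
    have eq: "inner (w * s powr (q/p), s) tau - Lam p q tau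
           = inner (w, 1) Phi - Lam p q Phi + c"
      using Lam_Phi(2)[OF assms(1,2) tau assms(4), of w] by (simp add: Phi_def c_def)
    have "inner (w, 1) Phi - Lam p q Phi \<le> M"
      unfolding M_def using assms PD by (intro Lam_tangent) auto
    then show ?thesis unfolding eq by simp
  qed
  define Psi where "Psi = (fst tau0 * s powr (- q/p), (1 - (1 - p * snd tau0) / s) / p)"
  have r0: "1 - p * snd tau0 > 0" using assms p by (simp add: Dp_iff field_simps)
  have PsiD: "Psi \<in> Dp p"
    using r0 assms p by (simp add: Psi_def Dp_iff field_simps)
  have PhiPsi: "(fst Psi * s powr (q/p), (1 - (1 - p * snd Psi) * s) / p) = tau0"
  proof -
    have "s powr (- q/p) * s powr (q/p) = 1" using assms by (simp flip: powr_add)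
    moreover have "(1 - (1 - p * ((1 - (1 - p * snd tau0) / s) / p)) * s) / p = snd tau0"
      using p assms by (simp add: field_simps)
    ultimately show ?thesis by (simp add: Psi_def prod_eq_iff)
  qed
  have atPsi: "inner (w * s powr (q/p), s) Psi - Lam p q Psi = M + c"
    using Lam_Phi(2)[OF assms(1,2) PsiD assms(4), of w] PhiPsi by (simp add: M_def c_def)
  have "LamStar p q (w * s powr (q/p), s) = ereal (M + c)"
    unfolding LamStar_def
  proof (rule antisym)
    show "(SUP tau\<in>Dp p. ereal (inner (w * s powr (q / p), s) tau - Lam p q tau)) \<le> ereal (M + c)"
      by (rule SUP_least) (rule le)
    show "ereal (M + c) \<le> (SUP tau\<in>Dp p. ereal (inner (w * s powr (q / p), s) tau - Lam p q tau))"
      using atPsi by (intro SUP_upper2[OF PsiD]) simp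
  qed
  then show ?thesis by (simp add: M_def c_def)
qed



lemma ln_less_minus_one:
  fixes s :: real assumes "s > 0" "s \<noteq> 1" shows "ln s < s - 1"
proof -
  define u where "u = sqrt s"
  have u: "u > 0" "u \<noteq> 1" "s = u * u" using assms by (auto simp: u_def)
  have "ln s = 2 * ln u" using u by (simp add: ln_mult)
  also have "\<dots> \<le> 2 * (u - 1)" using ln_le_minus_one[OF u(1)] by simp
  also have "\<dots> < s - 1"
  proof -
    have "0 < (u - 1) * (u - 1)" using u(2) by (cases "u < 1") (auto simp: zero_less_mult_iff)
    then show ?thesis using u by (simp add: algebra_simps)
  qed
  finally show ?thesis .
qed

theorem lemma2p4:
  fixes p q z :: real
  assumes "1 \<le> q" and "q < p"
    and "z > mpq p q"
    and "(z powr q, 1) \<in> Jp p q"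
  defines "S \<equiv> {t :: real \<times> real. fst t > 0 \<and> snd t > 0 \<and>
                  fst t powr (1/q) * snd t powr (-1/p) = z}"
  shows "(INF t \<in> S. LamStar p q t) = LamStar p q (z powr q, 1)
     \<and> {t \<in> S. LamStar p q t = (INF s \<in> S. LamStar p q s)} = {(z powr q, 1)}"
proof -
  have p: "p > 0" and q: "q > 0" using assms by auto
  have "mpq p q \<ge> 0" unfolding mpq_def by simp
  then have z: "z > 0" using assms by simp
  obtain tau0 where tau0: "tau0 \<in> Dp p"
    and der: "(Lam p q has_derivative (\<lambda>h. inner (z powr q, 1) h)) (at tau0)"
    using assms(4) by (auto simp: Jp_def)
  define M where "M = inner (z powr q, 1) tau0 - Lam p q tau0"
  have val: "LamStar p q (z powr q * s powr (q/p), s) = ereal (M + (s - 1 - ln s) / p)"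
    if "s > 0" for s
    using LamStar_value[OF assms(1,2) tau0 that der] by (simp add: M_def)
  have x0: "LamStar p q (z powr q, 1) = ereal M" using val[of 1] by simp
  have x0S: "(z powr q, 1) \<in> S"
    using z q by (simp add: S_def powr_powr)
  have formS: "t = (z powr q * snd t powr (q/p), snd t) \<and> snd t > 0" if t: "t \<in> S" for t
  proof -
    obtain t1 t2 where tt: "t = (t1, t2)" by (cases t)
    have t1: "t1 > 0" and t2: "t2 > 0" and eq: "t1 powr (1/q) * t2 powr (-1/p) = z"
      using t by (auto simp: S_def tt)
    have "t1 powr (1/q) = t1 powr (1/q) * (t2 powr (-1/p) * t2 powr (1/p))"
      using t2 by (simp flip: powr_add)
    also have "\<dots> = z * t2 powr (1/p)" using eq by (simp add: mult.assoc[symmetric])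
    finally have "(t1 powr (1/q)) powr q = (z * t2 powr (1/p)) powr q" by simp
    then have "t1 = z powr q * t2 powr (q/p)"
      using t1 t2 z q by (simp add: powr_powr powr_mult)
    then show ?thesis using tt t2 by simp
  qed
  have ge: "ereal M \<le> LamStar p q t" if "t \<in> S" for t
  proof -
    have s: "snd t > 0" and tf: "t = (z powr q * snd t powr (q/p), snd t)" using formS[OF that] by auto
    have "0 \<le> (snd t - 1 - ln (snd t)) / p" using ln_le_minus_one[OF s] p by simp
    then show ?thesis by (subst tf, subst val[OF s]) simp
  qed
  have eqv: "t = (z powr q, 1)" if "t \<in> S" "LamStar p q t = ereal M" for t
  proof -
    have s: "snd t > 0" and tf: "t = (z powr q * snd t powr (q/p), snd t)" using formS[OF that(1)] by auto
    have "LamStar p q t = ereal (M + (snd t - 1 - ln (snd t)) / p)"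
      by (subst tf, rule val[OF s])
    then have "ereal (M + (snd t - 1 - ln (snd t)) / p) = ereal M"
      using that(2) by simp
    then have "snd t - 1 - ln (snd t) = 0" using p by simp
    then have "snd t = 1"
    proof (rule contrapos_pp)
      assume "snd t \<noteq> 1"
      then show "snd t - 1 - ln (snd t) \<noteq> 0" using ln_less_minus_one[OF s] by simp
    qed
    then show ?thesis using tf by simp
  qed
  have INF: "(INF t \<in> S. LamStar p q t) = LamStar p q (z powr q, 1)"
  proof (rule antisym)
    show "(INF t \<in> S. LamStar p q t) \<le> LamStar p q (z powr q, 1)" by (rule INF_lower[OF x0S])
    show "LamStar p q (z powr q, 1) \<le> (INF t \<in> S. LamStar p q t)"
      unfolding x0 by (rule INF_greatest) (rule ge)
  qed
  have "{t \<in> S. LamStar p q t = (INF s \<in> S. LamStar p q s)} = {(z powr q, 1)}"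
  proof (intro equalityI subsetI)
    fix t :: "real \<times> real" assume "t \<in> {t \<in> S. LamStar p q t = (INF s \<in> S. LamStar p q s)}"
    then have "t \<in> S" "LamStar p q t = ereal M" unfolding INF x0 by auto
    then show "t \<in> {(z powr q, 1)}" using eqv by simp
  next
    fix t :: "real \<times> real" assume "t \<in> {(z powr q, 1)}"
    then show "t \<in> {t \<in> S. LamStar p q t = (INF s \<in> S. LamStar p q s)}"
      unfolding INF using x0S by simp
  qed
  with INF show ?thesis by simp
qed

end
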